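(* Let $\gamma$ be a consistent family of grafts for a tree $\mathcal T$ and let $B$ be a branch in $\mathcal H=\mathrm{hybr}(\mathcal T,\gamma)$. (a) If $\mathcal G\in\gamma$ and $B\cap\mathrm{nodes}\,\mathcal G\ne\emptyset$, then $B\cap\mathrm{nodes}\,\mathcal G$ is a branch in $\mathcal G$. (b) If every graft in $\gamma$ has bounded chains, then $B\cap\mathrm{supp}(\mathcal T,\gamma)$ is cofinal in $B$ with respect to $\mathcal H$, i.e. for every $b\in B$ there is $c\in B\cap\mathrm{supp}(\mathcal T,\gamma)$ with $b\le_{\mathcal H}c$.
   Context: A tree is a pair $(Q,<)$ with $<$ irreflexive transitive and each set of predecessors well-ordered; a chain is a set of pairwise comparable nodes, a branch an inclusion-maximal chain; the tree has bounded chains if every nonempty chain $C$ has a node $z$ with $c\le z$ for all $c\in C$; $\max\mathcal T$ = maximal nodes; $A{\downarrow}_{\mathcal T}=\{v:\exists a\in A\ a\le_{\mathcal T}v\}$; $x\parallel_{\mathcal T}y$ means incomparable; for an antichain $A$ and $x\in A{\downarrow}_{\mathcal T}$, $\mathrm{root}_{\mathcal T}(x,A)$ is the unique $r\in A$ with $r\le_{\mathcal T}x$. A graft for $\mathcal T$ is a tree $\mathcal G$ with more than one node, least node $0_{\mathcal G}\in\mathrm{nodes}\,\mathcal T$, with $\max\mathcal G\subseteq\{v\in\mathrm{nodes}\,\mathcal T:v>_{\mathcal T}0_{\mathcal G}\}$ an antichain in $\mathcal T$, and $\mathrm{impl}\,\mathcal G:=\mathrm{nodes}\,\mathcal G\setminus(\{0_{\mathcal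 G}\}\cup\max\mathcal G)$ disjoint from $\mathrm{nodes}\,\mathcal T$; $\mathrm{expl}(\mathcal T,\mathcal G)=\{v:v>_{\mathcal T}0_{\mathcal G}\}\setminus(\max\mathcal G){\downarrow}_{\mathcal T}$. $\gamma$ is a consistent family of grafts for $\mathcal T$ if its members are grafts for $\mathcal T$ with pairwise disjoint implants and for distinct $\mathcal D,\mathcal E\in\gamma$: $0_{\mathcal D}\parallel_{\mathcal T}0_{\mathcal E}$ or $0_{\mathcal D}\in(\max\mathcal E){\downarrow}_{\mathcal T}$ or $0_{\mathcal E}\in(\max\mathcal D){\downarrow}_{\mathcal T}$. $\mathrm{supp}(\mathcal T,\gamma)=\mathrm{nodes}\,\mathcal T\setminus\bigcup_{\mathcal G\in\gamma}\mathrm{expl}(\mathcal T,\mathcal G)$. $\mathrm{hybr}(\mathcal T,\gamma)=(H,<)$ where $H=\mathrm{supp}(\mathcal T,\gamma)\cup\bigcup_{\mathcal G\in\gamma}\mathrm{impl}\,\mathcal G$ and $x<y$ iff: (b1) $x,y\in\mathrm{supp}$, $x<_{\mathcal T}y$; or (b2) $x,y\in\mathrm{impl}\,\mathcal G$, $x<_{\mathcal G}y$ for some $\mathcal G\in\gamma$; or (b3) $x\in\mathrm{supp}$, $y\in\mathrm{impl}\,\mathcal G$, $x\le_{\mathcal T}0_{\mathcal G}$; or (b4) $x\in\mathrm{impl}\,\mathcal G$, $y\in\mathrm{supp}\cap(\max\mathcal G){\downarrow}_{\mathcal T}$, $x<_{\mathcal G}\mathrm{root}_{\mathcal T}(y,\max\mathcal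 G)$; or (b5) for distinct $\mathcal D,\mathcal E\in\gamma$: $x\in\mathrm{impl}\,\mathcal D$, $y\in\mathrm{impl}\,\mathcal E$, $0_{\mathcal E}\in(\max\mathcal D){\downarrow}_{\mathcal T}$, $x<_{\mathcal D}\mathrm{root}_{\mathcal T}(0_{\mathcal E},\max\mathcal D)$. It is a tree. *)

theory Defs
  imports Main
begin

type_synonym 'a tree = "'a set \<times> ('a \<Rightarrow> 'a \<Rightarrow> bool)"

definition nodes :: "'a tree \<Rightarrow> 'a set" where "nodes T = fst T"
definition lt :: "'a tree \<Rightarrow> 'a \<Rightarrow> 'a \<Rightarrow> bool" where "lt T = snd T"
definition le :: "'a tree \<Rightarrow> 'a \<Rightarrow> 'a \<Rightarrow> bool" where
  "le T x y \<longleftrightarrow> lt T x y \<or> (x = y \<and> x \<in> nodes T)"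

definition is_tree :: "'a tree \<Rightarrow> bool" where
  "is_tree T \<longleftrightarrow>
     (\<forall>x y. lt T x y \<longrightarrow> x \<in> nodes T \<and> y \<in> nodes T) \<and>
     (\<forall>x. \<not> lt T x x) \<and>
     (\<forall>x y z. lt T x y \<longrightarrow> lt T y z \<longrightarrow> lt T x z) \<and>
     (\<forall>x \<in> nodes T.
        (\<forall>y z. lt T y x \<longrightarrow> lt T z x \<longrightarrow> y = z \<or> lt T y z \<or> lt T z y) \<and>
        (\<forall>S. S \<subseteq> {y. lt T y x} \<longrightarrow> S \<noteq> {} \<longrightarrow> (\<exists>m\<in>S. \<forall>s\<in>S. \<not> lt T s m)))"

definition incomparable :: "'a tree \<Rightarrow> 'a \<Rightarrow> 'a \<Rightarrow> bool" where
  "incomparable T x y \<longleftrightarrow> \<not> le T x y \<and> \<not> le T y x"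

definition chain :: "'a tree \<Rightarrow> 'a set \<Rightarrow> bool" where
  "chain T C \<longleftrightarrow> C \<subseteq> nodes T \<and> (\<forall>x\<in>C. \<forall>y\<in>C. le T x y \<or> le T y x)"

definition branch :: "'a tree \<Rightarrow> 'a set \<Rightarrow> bool" where
  "branch T B \<longleftrightarrow> chain T B \<and> (\<forall>C. chain T C \<longrightarrow> B \<subseteq> C \<longrightarrow> C = B)"

definition bounded_chains :: "'a tree \<Rightarrow> bool" where
  "bounded_chains T \<longleftrightarrow>
     (\<forall>C. chain T C \<longrightarrow> C \<noteq> {} \<longrightarrow> (\<exists>z\<in>nodes T. \<forall>c\<in>C. le T c z))"

definition maxT :: "'a tree \<Rightarrow> 'a set" where
  "maxT T = {x \<in> nodes T. \<not> (\<exists>y. lt T x y)}"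

definition upclosure :: "'a set \<Rightarrow> 'a tree \<Rightarrow> 'a set" where
  "upclosure A T = {v. \<exists>a\<in>A. le T a v}"

definition antichain :: "'a tree \<Rightarrow> 'a set \<Rightarrow> bool" where
  "antichain T A \<longleftrightarrow> A \<subseteq> nodes T \<and> (\<forall>x\<in>A. \<forall>y\<in>A. x \<noteq> y \<longrightarrow> incomparable T x y)"

definition root :: "'a tree \<Rightarrow> 'a \<Rightarrow> 'a set \<Rightarrow> 'a" where
  "root T x A = (THE r. r \<in> A \<and> le T r x)"

definition zero :: "'a tree \<Rightarrow> 'a" where
  "zero G = (THE z. z \<in> nodes G \<and> (\<forall>v\<in>nodes G. le G z v))"

definition impl :: "'a tree \<Rightarrow> 'a set" where
  "impl G = nodes G - ({zero G} \<union> maxT G)"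

definition is_graft :: "'a tree \<Rightarrow> 'a tree \<Rightarrow> bool" where
  "is_graft T G \<longleftrightarrow>
     is_tree G \<and>
     (\<exists>x\<in>nodes G. \<exists>y\<in>nodes G. x \<noteq> y) \<and>
     (\<exists>z\<in>nodes G. \<forall>v\<in>nodes G. le G z v) \<and>
     zero G \<in> nodes T \<and>
     maxT G \<subseteq> {v \<in> nodes T. lt T (zero G) v} \<and>
     antichain T (maxT G) \<and>
     impl G \<inter> nodes T = {}"

definition expl :: "'a tree \<Rightarrow> 'a tree \<Rightarrow> 'a set" where
  "expl T G = {v. lt T (zero G) v} - upclosure (maxT G) T"

definition consistent :: "'a tree \<Rightarrow> 'a tree set \<Rightarrow> bool" where
  "consistent T \<gamma> \<longleftrightarrow>
     (\<forall>G\<in>\<gamma>. is_graft T G) \<and>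
     (\<forall>D\<in>\<gamma>. \<forall>E\<in>\<gamma>. D \<noteq> E \<longrightarrow>
        impl D \<inter> impl E = {} \<and>
        (incomparable T (zero D) (zero E) \<or>
         zero D \<in> upclosure (maxT E) T \<or>
         zero E \<in> upclosure (maxT D) T))"

definition supp :: "'a tree \<Rightarrow> 'a tree set \<Rightarrow> 'a set" where
  "supp T \<gamma> = nodes T - (\<Union>G\<in>\<gamma>. expl T G)"

definition hybr :: "'a tree \<Rightarrow> 'a tree set \<Rightarrow> 'a tree" where
  "hybr T \<gamma> =
    (supp T \<gamma> \<union> (\<Union>G\<in>\<gamma>. impl G),
     \<lambda>x y.
       (x \<in> supp T \<gamma> \<and> y \<in> supp T \<gamma> \<and> lt T x y) \<or>
       (\<exists>G\<in>\<gamma>. x \<in> impl G \<and> y \<in> impl G \<and> lt G x y) \<or>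
       (\<exists>G\<in>\<gamma>. x \<in> supp T \<gamma> \<and> y \<in> impl G \<and> le T x (zero G)) \<or>
       (\<exists>G\<in>\<gamma>. x \<in> impl G \<and> y \<in> supp T \<gamma> \<and> y \<in> upclosure (maxT G) T \<and>
                lt G x (root T y (maxT G))) \<or>
       (\<exists>D\<in>\<gamma>. \<exists>E\<in>\<gamma>. D \<noteq> E \<and> x \<in> impl D \<and> y \<in> impl E \<and>
                zero E \<in> upclosure (maxT D) T \<and>
                lt D x (root T (zero E) (maxT D))))"

end

theory Submission imports Defs begin

section \<open>Generic trees\<close>

lemma tr_nodes: "is_tree X \<Longrightarrow> lt X x y \<Longrightarrow> x \<in> nodes X \<and> y \<in> nodes X"
  unfolding is_tree_def by blast
lemma tr_irr: "is_tree X \<Longrightarrow> \<not> lt X x x"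
  unfolding is_tree_def by blast
lemma tr_trans: "is_tree X \<Longrightarrow> lt X x y \<Longrightarrow> lt X y z \<Longrightarrow> lt X x z"
  unfolding is_tree_def by blast
lemma tr_lin: assumes t: "is_tree X" and a: "lt X y x" and b: "lt X z x" shows "y = z \<or> lt X y z \<or> lt X z y"
proof -
  have x: "x \<in> nodes X" using tr_nodes[OF t a] by blast
  have "\<forall>x \<in> nodes X.
        (\<forall>y z. lt X y x \<longrightarrow> lt X z x \<longrightarrow> y = z \<or> lt X y z \<or> lt X z y) \<and>
        (\<forall>S. S \<subseteq> {y. lt X y x} \<longrightarrow> S \<noteq> {} \<longrightarrow> (\<exists>m\<in>S. \<forall>s\<in>S. \<not> lt X s m))"
    using t unfolding is_tree_def by (elim conjE) assumption
  hence "(\<forall>y z. lt X y x \<longrightarrow> lt X z x \<longrightarrow> y = z \<or> lt X y z \<or> lt X z y) \<and>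
        (\<forall>S. S \<subseteq> {y. lt X y x} \<longrightarrow> S \<noteq> {} \<longrightarrow> (\<exists>m\<in>S. \<forall>s\<in>S. \<not> lt X s m))"
    using x by (rule bspec)
  hence "\<forall>y z. lt X y x \<longrightarrow> lt X z x \<longrightarrow> y = z \<or> lt X y z \<or> lt X z y" by (rule conjunct1)
  thus ?thesis using a b by blast
qed
lemma tr_asym: "is_tree X \<Longrightarrow> lt X x y \<Longrightarrow> \<not> lt X y x"
  using tr_trans[of X x y x] tr_irr[of X x] by blast
lemma tr_le_lt: "is_tree X \<Longrightarrow> le X x y \<Longrightarrow> lt X y z \<Longrightarrow> lt X x z"
  unfolding le_def by (metis tr_trans)
lemma tr_lt_le: "is_tree X \<Longrightarrow> lt X x y \<Longrightarrow> le X y z \<Longrightarrow> lt X x z"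
  unfolding le_def by (metis tr_trans)
lemma tr_le_le: "is_tree X \<Longrightarrow> le X x y \<Longrightarrow> le X y z \<Longrightarrow> le X x z"
  unfolding le_def by (metis tr_trans)
lemma tr_lin_le: "is_tree X \<Longrightarrow> le X y x \<Longrightarrow> le X z x \<Longrightarrow> le X y z \<or> le X z y"
  unfolding le_def using tr_lin tr_nodes by metis
lemma tr_le_lin_lt: "is_tree X \<Longrightarrow> le X y x \<Longrightarrow> lt X z x \<Longrightarrow> le X y z \<or> lt X z y"
  unfolding le_def using tr_lin tr_nodes by metis
lemma le_refl: "x \<in> nodes X \<Longrightarrow> le X x x" unfolding le_def by blast
lemma lt_le: "lt X x y \<Longrightarrow> le X x y" unfolding le_def by blast

lemma chain_ins: assumes ch: "chain X C" and y: "y \<in> nodes X" and u: "\<forall>c\<in>C. le X c y"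
  shows "chain X (insert y C)"
  unfolding chain_def
proof (intro conjI ballI)
  show "insert y C \<subseteq> nodes X" using ch y unfolding chain_def by blast
next
  fix a b assume a: "a \<in> insert y C" and b: "b \<in> insert y C"
  show "le X a b \<or> le X b a"
  proof (cases "a = y")
    case True
    show ?thesis
    proof (cases "b = y")
      case True thus ?thesis using \<open>a = y\<close> le_refl[OF y] by simp
    next
      case False thus ?thesis using \<open>a = y\<close> b u by blast
    qed
  next
    case False
    hence aC: "a \<in> C" using a by blast
    show ?thesis
    proof (cases "b = y")
      case True thus ?thesis using aC u by blast
    next
      case False thus ?thesis using aC b ch unfolding chain_def by blast
    qed
  qed
qed

section \<open>Grafts\<close>

lemma mxN: "m \<in> maxT G \<Longrightarrow> m \<in> nodes G" unfolding maxT_def by blast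
lemma mxL: "m \<in> maxT G \<Longrightarrow> \<not> lt G m y" unfolding maxT_def by blast


lemma zero_prop:
  assumes "is_graft T G"
  shows "zero G \<in> nodes G \<and> (\<forall>v\<in>nodes G. le G (zero G) v)"
proof -
  have t: "is_tree G" using assms unfolding is_graft_def by blast
  obtain z where z: "z \<in> nodes G" "\<forall>v\<in>nodes G. le G z v" using assms unfolding is_graft_def by blast
  have U: "\<And>z'. z' \<in> nodes G \<and> (\<forall>v\<in>nodes G. le G z' v) \<Longrightarrow> z' = z"
  proof -
    fix z' assume h: "z' \<in> nodes G \<and> (\<forall>v\<in>nodes G. le G z' v)"
    have a: "le G z z'" using z h by blast
    have b: "le G z' z" using z h by blast
    show "z' = z"
    proof (rule ccontr)
      assume "z' \<noteq> z"
      hence "lt G z z'" "lt G z' z" using a b unfolding le_def by auto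
      thus False using tr_asym[OF t] by blast
    qed
  qed
  have "zero G = z" unfolding zero_def
  proof (rule the_equality)
    show "z \<in> nodes G \<and> (\<forall>v\<in>nodes G. le G z v)" using z by blast
  qed (rule U)
  thus ?thesis using z by simp
qed

context
  fixes T G :: "'a tree"
  assumes tT: "is_tree T" and gr: "is_graft T G"
begin

lemma g_tree: "is_tree G" using gr unfolding is_graft_def by blast
lemma g_zero: "zero G \<in> nodes G" "v \<in> nodes G \<Longrightarrow> le G (zero G) v"
  using zero_prop[OF gr] by auto
lemma g_zero_T: "zero G \<in> nodes T" using gr unfolding is_graft_def by blast
lemma g_max: "m \<in> maxT G \<Longrightarrow> m \<in> nodes T \<and> lt T (zero G) m"
  using gr unfolding is_graft_def by blast
lemma g_maxG: "m \<in> maxT G \<Longrightarrow> m \<in> nodes G" "m \<in> maxT G \<Longrightarrow> \<not> lt G m y"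
  unfolding maxT_def by auto
lemma g_anti: "m \<in> maxT G \<Longrightarrow> m' \<in> maxT G \<Longrightarrow> le T m m' \<Longrightarrow> m = m'"
  using gr unfolding is_graft_def antichain_def incomparable_def by blast
lemma g_impl_T: "x \<in> impl G \<Longrightarrow> x \<notin> nodes T"
  using gr unfolding is_graft_def by blast
lemma g_impl: "x \<in> impl G \<Longrightarrow> x \<in> nodes G \<and> x \<noteq> zero G \<and> x \<notin> maxT G"
  unfolding impl_def by blast
lemma g_cases: "v \<in> nodes G \<Longrightarrow> v = zero G \<or> v \<in> maxT G \<or> v \<in> impl G"
  unfolding impl_def by blast
lemma g_zero_lt: "v \<in> nodes G \<Longrightarrow> v \<noteq> zero G \<Longrightarrow> lt G (zero G) v"
  using g_zero unfolding le_def by blast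
lemma g_zero_notmax: "zero G \<notin> maxT G"
proof
  assume a: "zero G \<in> maxT G"
  obtain x y where "x \<in> nodes G" "y \<in> nodes G" "x \<noteq> y" using gr unfolding is_graft_def by blast
  then obtain v where "v \<in> nodes G" "v \<noteq> zero G" by blast
  hence "lt G (zero G) v" using g_zero_lt by blast
  thus False using a g_maxG by blast
qed
lemma g_root: "m \<in> maxT G \<Longrightarrow> le T m v \<Longrightarrow> root T v (maxT G) = m"
proof -
  assume m: "m \<in> maxT G" "le T m v"
  have U: "\<And>r. r \<in> maxT G \<and> le T r v \<Longrightarrow> r = m"
  proof -
    fix r assume r: "r \<in> maxT G \<and> le T r v"
    have "le T r m \<or> le T m r" using tr_lin_le[OF tT] r m(2) by blast
    thus "r = m" using g_anti r m(1) by blast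
  qed
  show ?thesis unfolding root_def
  proof (rule the_equality)
    show "m \<in> maxT G \<and> le T m v" using m by blast
  qed (rule U)
qed
lemma g_max_le: "m \<in> maxT G \<Longrightarrow> m' \<in> maxT G \<Longrightarrow> le T m v \<Longrightarrow> le T m' v \<Longrightarrow> m = m'"
  using g_anti tr_lin_le[OF tT] by metis

end


locale hyb =
  fixes T :: "'a tree" and \<Gamma> :: "'a tree set"
  assumes tT: "is_tree T" and cons: "consistent T \<Gamma>"
begin

abbreviation S where "S \<equiv> supp T \<Gamma>"
abbreviation H where "H \<equiv> hybr T \<Gamma>"

lemma gr: "G \<in> \<Gamma> \<Longrightarrow> is_graft T G" using cons unfolding consistent_def by blast

lemma impl_disj: "D \<in> \<Gamma> \<Longrightarrow> E \<in> \<Gamma> \<Longrightarrow> x \<in> impl D \<Longrightarrow> x \<in> impl E \<Longrightarrow> D = E"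
  using cons unfolding consistent_def by blast

lemma up_iff: "v \<in> upclosure A T \<longleftrightarrow> (\<exists>a\<in>A. le T a v)" unfolding upclosure_def by blast

lemma cons3: "D \<in> \<Gamma> \<Longrightarrow> E \<in> \<Gamma> \<Longrightarrow> D \<noteq> E \<Longrightarrow>
   incomparable T (zero D) (zero E) \<or> (\<exists>m\<in>maxT E. le T m (zero D)) \<or> (\<exists>m\<in>maxT D. le T m (zero E))"
  using cons unfolding consistent_def upclosure_def by blast

lemma zero_neq: assumes "D \<in> \<Gamma>" "E \<in> \<Gamma>" "D \<noteq> E" shows "zero D \<noteq> zero E"
proof
  assume eq: "zero D = zero E"
  have "le T (zero D) (zero E)" using eq g_zero_T[OF tT gr[OF assms(1)]] le_refl by metis
  hence ni: "\<not> incomparable T (zero D) (zero E)" unfolding incomparable_def by blast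
  have a: "\<not> (\<exists>m\<in>maxT E. le T m (zero D))"
    using eq g_max[OF tT gr[OF assms(2)]] tr_le_lt[OF tT] tr_irr[OF tT] by metis
  have b: "\<not> (\<exists>m\<in>maxT D. le T m (zero E))"
    using eq g_max[OF tT gr[OF assms(1)]] tr_le_lt[OF tT] tr_irr[OF tT] by metis
  show False using cons3[OF assms] ni a b by blast
qed

lemma zero_lt: assumes "D \<in> \<Gamma>" "E \<in> \<Gamma>" "lt T (zero D) (zero E)"
  shows "\<exists>m\<in>maxT D. le T m (zero E)"
proof -
  have ne: "D \<noteq> E" using assms(3) tr_irr[OF tT] by blast
  have ni: "\<not> incomparable T (zero D) (zero E)" using assms(3) unfolding incomparable_def le_def by blast
  have a: "\<not> (\<exists>m\<in>maxT E. le T m (zero D))"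
  proof
    assume "\<exists>m\<in>maxT E. le T m (zero D)"
    then obtain m where m: "m \<in> maxT E" "le T m (zero D)" by blast
    have "lt T (zero E) m" using g_max[OF tT gr[OF assms(2)] m(1)] by blast
    hence "lt T (zero E) (zero D)" using m(2) tr_lt_le[OF tT] by blast
    thus False using assms(3) tr_asym[OF tT] by blast
  qed
  show ?thesis using cons3[OF assms(1,2) ne] ni a by blast
qed

lemma S_iff: "y \<in> S \<longleftrightarrow> y \<in> nodes T \<and> (\<forall>G\<in>\<Gamma>. y \<notin> expl T G)"
  unfolding supp_def by blast

lemma S_up: "y \<in> S \<Longrightarrow> G \<in> \<Gamma> \<Longrightarrow> lt T (zero G) y \<Longrightarrow> \<exists>m\<in>maxT G. le T m y"
  unfolding S_iff expl_def upclosure_def by blast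

lemma S_T: "y \<in> S \<Longrightarrow> y \<in> nodes T" unfolding S_iff by blast

lemma S_notimpl: "y \<in> S \<Longrightarrow> G \<in> \<Gamma> \<Longrightarrow> y \<notin> impl G"
  using S_T g_impl_T[OF tT gr] by blast

lemma zero_S: assumes "G \<in> \<Gamma>" shows "zero G \<in> S"
proof -
  have "\<forall>E\<in>\<Gamma>. zero G \<notin> expl T E"
  proof
    fix E assume E: "E \<in> \<Gamma>"
    show "zero G \<notin> expl T E"
    proof
      assume "zero G \<in> expl T E"
      hence l: "lt T (zero E) (zero G)" and nu: "zero G \<notin> upclosure (maxT E) T" unfolding expl_def by auto
      from zero_lt[OF E assms l] nu show False unfolding up_iff by blast
    qed
  qed
  thus ?thesis using g_zero_T[OF tT gr[OF assms]] S_iff by blast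
qed

lemma max_S: assumes "G \<in> \<Gamma>" "m \<in> maxT G" shows "m \<in> S"
proof -
  have mT: "m \<in> nodes T" and zm: "lt T (zero G) m" using g_max[OF tT gr[OF assms(1)] assms(2)] by auto
  have "\<forall>E\<in>\<Gamma>. m \<notin> expl T E"
  proof
    fix E assume E: "E \<in> \<Gamma>"
    show "m \<notin> expl T E"
    proof
      assume "m \<in> expl T E"
      hence l: "lt T (zero E) m" and nu: "\<not> (\<exists>a\<in>maxT E. le T a m)" unfolding expl_def upclosure_def by auto
      show False
      proof (cases "E = G")
        case True thus False using nu assms(2) le_refl[OF mT] by blast
      next
        case False
        have "zero E = zero G \<or> lt T (zero E) (zero G) \<or> lt T (zero G) (zero E)"
          using tr_lin[OF tT l zm] .
        moreover have "zero E \<noteq> zero G" using zero_neq[OF E assms(1) False] .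
        moreover have "\<not> lt T (zero E) (zero G)"
        proof
          assume "lt T (zero E) (zero G)"
          then obtain a where "a \<in> maxT E" "le T a (zero G)" using zero_lt[OF E assms(1)] by blast
          thus False using nu zm tr_le_lt[OF tT] lt_le by metis
        qed
        moreover have "\<not> lt T (zero G) (zero E)"
        proof
          assume "lt T (zero G) (zero E)"
          then obtain a where a: "a \<in> maxT G" "le T a (zero E)" using zero_lt[OF assms(1) E] by blast
          hence "lt T a m" using l tr_le_lt[OF tT] by blast
          hence "a = m" using g_anti[OF tT gr[OF assms(1)] a(1) assms(2) lt_le] by blast
          thus False using \<open>lt T a m\<close> tr_irr[OF tT] by blast
        qed
        ultimately show False by blast
      qed
    qed
  qed
  thus ?thesis using mT S_iff by blast
qed

lemma noexpl: assumes "y \<in> S" "G \<in> \<Gamma>" "m \<in> maxT G" "lt T (zero G) y" "lt T y m" shows False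
proof -
  obtain m' where m': "m' \<in> maxT G" "le T m' y" using S_up[OF assms(1,2,4)] by blast
  hence "lt T m' m" using assms(5) tr_le_lt[OF tT] by blast
  hence "m' = m" using g_anti[OF tT gr[OF assms(2)] m'(1) assms(3) lt_le] by blast
  thus False using \<open>lt T m' m\<close> tr_irr[OF tT] by blast
qed

lemma nodes_H: "nodes H = S \<union> (\<Union>G\<in>\<Gamma>. impl G)" unfolding hybr_def nodes_def by simp

lemma ltHE:
  assumes "lt H x y"
  obtains (b1) "x \<in> S" "y \<in> S" "lt T x y"
  | (b2) G where "G\<in>\<Gamma>" "x \<in> impl G" "y \<in> impl G" "lt G x y"
  | (b3) G where "G\<in>\<Gamma>" "x \<in> S" "y \<in> impl G" "le T x (zero G)"
  | (b4) G m where "G\<in>\<Gamma>" "x \<in> impl G" "y \<in> S" "m \<in> maxT G" "le T m y" "lt G x m"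
  | (b5) D E m where "D\<in>\<Gamma>" "E\<in>\<Gamma>" "D\<noteq>E" "x \<in> impl D" "y \<in> impl E" "m \<in> maxT D"
          "le T m (zero E)" "lt D x m"
proof -
  have "(x \<in> S \<and> y \<in> S \<and> lt T x y) \<or>
       (\<exists>G\<in>\<Gamma>. x \<in> impl G \<and> y \<in> impl G \<and> lt G x y) \<or>
       (\<exists>G\<in>\<Gamma>. x \<in> S \<and> y \<in> impl G \<and> le T x (zero G)) \<or>
       (\<exists>G\<in>\<Gamma>. x \<in> impl G \<and> y \<in> S \<and> y \<in> upclosure (maxT G) T \<and>
                lt G x (root T y (maxT G))) \<or>
       (\<exists>D\<in>\<Gamma>. \<exists>E\<in>\<Gamma>. D \<noteq> E \<and> x \<in> impl D \<and> y \<in> impl E \<and>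
                zero E \<in> upclosure (maxT D) T \<and>
                lt D x (root T (zero E) (maxT D)))"
    using assms unfolding hybr_def lt_def by simp
  thus thesis
  proof (elim disjE bexE conjE)
    fix G assume G: "G \<in> \<Gamma>" "x \<in> impl G" "y \<in> S" "y \<in> upclosure (maxT G) T"
      "lt G x (root T y (maxT G))"
    then obtain m where m: "m \<in> maxT G" "le T m y" unfolding up_iff by blast
    have "root T y (maxT G) = m" using g_root[OF tT gr[OF G(1)] m] .
    thus thesis using b4 G m by simp
  next
    fix D E assume G: "D \<in> \<Gamma>" "E \<in> \<Gamma>" "D \<noteq> E" "x \<in> impl D" "y \<in> impl E"
      "zero E \<in> upclosure (maxT D) T" "lt D x (root T (zero E) (maxT D))"
    then obtain m where m: "m \<in> maxT D" "le T m (zero E)" unfolding up_iff by blast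
    have "root T (zero E) (maxT D) = m" using g_root[OF tT gr[OF G(1)] m] .
    thus thesis using b5 G m by simp
  qed (use b1 b2 b3 in blast)+
qed

lemma b1I: "x \<in> S \<Longrightarrow> y \<in> S \<Longrightarrow> lt T x y \<Longrightarrow> lt H x y"
  unfolding hybr_def lt_def by simp
lemma b2I: "G\<in>\<Gamma> \<Longrightarrow> x \<in> impl G \<Longrightarrow> y \<in> impl G \<Longrightarrow> lt G x y \<Longrightarrow> lt H x y"
  unfolding hybr_def lt_def by auto
lemma b3I: "G\<in>\<Gamma> \<Longrightarrow> x \<in> S \<Longrightarrow> y \<in> impl G \<Longrightarrow> le T x (zero G) \<Longrightarrow> lt H x y"
  unfolding hybr_def lt_def by auto
lemma b4I: assumes "G\<in>\<Gamma>" "x \<in> impl G" "y \<in> S" "m \<in> maxT G" "le T m y" "lt G x m"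
  shows "lt H x y"
proof -
  have "root T y (maxT G) = m" using g_root[OF tT gr[OF assms(1)] assms(4,5)] .
  moreover have "y \<in> upclosure (maxT G) T" using assms(4,5) up_iff by blast
  ultimately show ?thesis using assms unfolding hybr_def lt_def by auto
qed
lemma b5I: assumes "D\<in>\<Gamma>" "E\<in>\<Gamma>" "D\<noteq>E" "x \<in> impl D" "y \<in> impl E" "m \<in> maxT D"
          "le T m (zero E)" "lt D x m"
  shows "lt H x y"
proof -
  have "root T (zero E) (maxT D) = m" using g_root[OF tT gr[OF assms(1)] assms(6,7)] .
  moreover have "zero E \<in> upclosure (maxT D) T" using assms(6,7) up_iff by blast
  ultimately show ?thesis using assms unfolding hybr_def lt_def by auto
qed

lemma H_nodes: "lt H x y \<Longrightarrow> x \<in> nodes H \<and> y \<in> nodes H"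
  unfolding nodes_H by (erule ltHE) auto

end
context hyb begin

lemma Gtr: "G \<in> \<Gamma> \<Longrightarrow> is_tree G" using g_tree[OF tT gr] .
lemma zm: "G \<in> \<Gamma> \<Longrightarrow> m \<in> maxT G \<Longrightarrow> lt T (zero G) m" using g_max[OF tT gr] by blast
lemma SI: "y \<in> S \<Longrightarrow> y \<in> impl G \<Longrightarrow> G \<in> \<Gamma> \<Longrightarrow> P" using S_notimpl by blast

lemma H_trans: assumes xy: "lt H x y" and yz: "lt H y z" shows "lt H x z"
  using xy
proof (cases rule: ltHE)
  case b1 note X = this
  from yz show ?thesis
  proof (cases rule: ltHE)
    case b1 show ?thesis by (rule b1I[OF X(1) b1(2) tr_trans[OF tT X(3) b1(3)]])
  next
    case (b3 G) show ?thesis by (rule b3I[OF b3(1) X(1) b3(3) lt_le[OF tr_lt_le[OF tT X(3) b3(4)]]])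
  next
    case (b2 G) show ?thesis by (rule SI[OF X(2) b2(2) b2(1)])
  next
    case (b4 G) show ?thesis by (rule SI[OF X(2) b4(2) b4(1)])
  next
    case (b5 D E) show ?thesis by (rule SI[OF X(2) b5(4) b5(1)])
  qed
next
  case (b2 G) note X = this
  from yz show ?thesis
  proof (cases rule: ltHE)
    case (b2 G')
    have e: "G' = G" by (rule impl_disj[OF b2(1) X(1) b2(2) X(3)])
    show ?thesis using b2I[OF X(1) X(2)] b2(3) e tr_trans[OF Gtr[OF X(1)] X(4)] b2(4) by simp
  next
    case (b4 G' m)
    have e: "G' = G" by (rule impl_disj[OF b4(1) X(1) b4(2) X(3)])
    show ?thesis using b4I[OF X(1) X(2) b4(3)] b4(4,5,6) e tr_trans[OF Gtr[OF X(1)] X(4)] by simp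
  next
    case (b5 D E m)
    have e: "D = G" by (rule impl_disj[OF b5(1) X(1) b5(4) X(3)])
    show ?thesis using b5I[OF X(1) b5(2) _ X(2) b5(5)] b5(3,6,7,8) e tr_trans[OF Gtr[OF X(1)] X(4)] by simp
  next
    case b1 show ?thesis by (rule SI[OF b1(1) X(3) X(1)])
  next
    case (b3 E) show ?thesis by (rule SI[OF b3(2) X(3) X(1)])
  qed
next
  case (b3 G) note X = this
  from yz show ?thesis
  proof (cases rule: ltHE)
    case (b2 G')
    have e: "G' = G" by (rule impl_disj[OF b2(1) X(1) b2(2) X(3)])
    show ?thesis using b3I[OF b2(1) X(2) b2(3)] X(4) e by simp
  next
    case (b4 G' m)
    have e: "G' = G" by (rule impl_disj[OF b4(1) X(1) b4(2) X(3)])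
    have "lt T x m" using tr_le_lt[OF tT X(4) zm[OF X(1)]] b4(4) e by simp
    hence "lt T x z" using tr_lt_le[OF tT _ b4(5)] by simp
    thus ?thesis using b1I[OF X(2) b4(3)] by simp
  next
    case (b5 D E m)
    have e: "D = G" by (rule impl_disj[OF b5(1) X(1) b5(4) X(3)])
    have "lt T x m" using tr_le_lt[OF tT X(4) zm[OF X(1)]] b5(6) e by simp
    hence "le T x (zero E)" using lt_le[OF tr_lt_le[OF tT _ b5(7)]] by simp
    thus ?thesis using b3I[OF b5(2) X(2) b5(5)] by simp
  next
    case b1 show ?thesis by (rule SI[OF b1(1) X(3) X(1)])
  next
    case (b3 E) show ?thesis by (rule SI[OF b3(2) X(3) X(1)])
  qed
next
  case (b4 G m) note X = this
  from yz show ?thesis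
  proof (cases rule: ltHE)
    case b1
    have "le T m z" using lt_le[OF tr_le_lt[OF tT X(5) b1(3)]] .
    thus ?thesis using b4I[OF X(1) X(2) b1(2) X(4) _ X(6)] by simp
  next
    case (b3 E)
    have mE: "le T m (zero E)" using tr_le_le[OF tT X(5) b3(4)] .
    show ?thesis
    proof (cases "E = G")
      case True
      hence "lt T m m" using tr_le_lt[OF tT mE] zm[OF X(1) X(4)] by simp
      thus ?thesis using tr_irr[OF tT] by blast
    next
      case False
      show ?thesis by (rule b5I[OF X(1) b3(1) _ X(2) b3(3) X(4) mE X(6)]) (use False in simp)
    qed
  next
    case (b2 G') show ?thesis by (rule SI[OF X(3) b2(2) b2(1)])
  next
    case (b4 G') show ?thesis by (rule SI[OF X(3) b4(2) b4(1)])
  next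
    case (b5 D E) show ?thesis by (rule SI[OF X(3) b5(4) b5(1)])
  qed
next
  case (b5 D E m) note X = this
  from yz show ?thesis
  proof (cases rule: ltHE)
    case (b2 G')
    have e: "G' = E" by (rule impl_disj[OF b2(1) X(2) b2(2) X(5)])
    show ?thesis using b5I[OF X(1) b2(1) _ X(4) b2(3) X(6) _ X(8)] X(3,7) e by simp
  next
    case (b4 G' m')
    have e: "G' = E" by (rule impl_disj[OF b4(1) X(2) b4(2) X(5)])
    have "lt T m m'" using tr_le_lt[OF tT X(7) zm[OF X(2)]] b4(4) e by simp
    hence "le T m z" using lt_le[OF tr_lt_le[OF tT _ b4(5)]] by simp
    thus ?thesis using b4I[OF X(1) X(4) b4(3) X(6) _ X(8)] by simp
  next
    case (b5 D' E' m')
    have e: "D' = E" by (rule impl_disj[OF b5(1) X(2) b5(4) X(5)])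
    have "lt T m m'" using tr_le_lt[OF tT X(7) zm[OF X(2)]] b5(6) e by simp
    hence l: "lt T m (zero E')" using tr_lt_le[OF tT _ b5(7)] by simp
    have ne: "D \<noteq> E'"
    proof
      assume "D = E'"
      hence "lt T m m" using tr_trans[OF tT l] zm[OF X(1) X(6)] by simp
      thus False using tr_irr[OF tT] by blast
    qed
    show ?thesis by (rule b5I[OF X(1) b5(2) ne X(4) b5(5) X(6) lt_le[OF l] X(8)])
  next
    case b1 show ?thesis by (rule SI[OF b1(1) X(5) X(2)])
  next
    case (b3 E') show ?thesis by (rule SI[OF b3(2) X(5) X(2)])
  qed
qed

end
context hyb begin

lemma mixA: assumes "y \<in> S" "G\<in>\<Gamma>" "z \<in> impl G" "m \<in> maxT G" "lt G z m" "le T y x" "le T m x"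
  shows "lt H y z \<or> lt H z y"
proof -
  have c: "le T y m \<or> le T m y" using tr_lin_le[OF tT assms(6,7)] .
  show ?thesis
  proof (cases "le T m y")
    case True thus ?thesis using b4I[OF assms(2,3,1,4) _ assms(5)] by simp
  next
    case False
    hence l: "lt T y m" using c unfolding le_def by auto
    have zm': "lt T (zero G) m" using zm[OF assms(2,4)] .
    have d: "y = zero G \<or> lt T y (zero G) \<or> lt T (zero G) y" using tr_lin[OF tT l zm'] .
    have n: "\<not> lt T (zero G) y" using noexpl[OF assms(1,2,4) _ l] by blast
    have "le T y (zero G)" using d n le_refl[OF S_T[OF assms(1)]] lt_le[of T y "zero G"] by auto
    thus ?thesis using b3I[OF assms(2,1,3)] by simp
  qed
qed

lemma mixB: assumes "G\<in>\<Gamma>" "G'\<in>\<Gamma>" "y\<in>impl G" "z\<in>impl G'" "m\<in>maxT G" "m'\<in>maxT G'"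
   "le T m x" "le T m' x" "lt G y m" "lt G' z m'"
  shows "y = z \<or> lt H y z \<or> lt H z y"
proof (cases "G = G'")
  case True
  hence "m = m'" using g_max_le[OF tT gr[OF assms(1)] assms(5) _ assms(7)] assms(6,8) by simp
  hence "y = z \<or> lt G y z \<or> lt G z y" using tr_lin[OF Gtr[OF assms(1)] assms(9)] assms(10) True by simp
  moreover have "lt G y z \<Longrightarrow> lt H y z" using b2I[OF assms(1,3)] assms(4) True by simp
  moreover have "lt G z y \<Longrightarrow> lt H z y" using b2I[OF assms(1) _ assms(3)] assms(4) True by simp
  ultimately show ?thesis by blast
next
  case False
  have a: "lt T (zero G) x" using tr_lt_le[OF tT zm[OF assms(1,5)] assms(7)] .
  have b: "lt T (zero G') x" using tr_lt_le[OF tT zm[OF assms(2,6)] assms(8)] .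
  have "zero G = zero G' \<or> lt T (zero G) (zero G') \<or> lt T (zero G') (zero G)" using tr_lin[OF tT a b] .
  moreover have "zero G \<noteq> zero G'" using zero_neq[OF assms(1,2) False] .
  moreover have "lt T (zero G) (zero G') \<Longrightarrow> lt H y z"
  proof -
    assume l: "lt T (zero G) (zero G')"
    then obtain n where n: "n \<in> maxT G" "le T n (zero G')" using zero_lt[OF assms(1,2)] by blast
    have "le T n x" using tr_le_le[OF tT n(2) lt_le[OF b]] .
    hence "n = m" using g_max_le[OF tT gr[OF assms(1)] n(1) assms(5) _ assms(7)] by simp
    thus ?thesis using b5I[OF assms(1,2) False assms(3,4) n(1,2)] assms(9) by simp
  qed
  moreover have "lt T (zero G') (zero G) \<Longrightarrow> lt H z y"
  proof -
    assume l: "lt T (zero G') (zero G)"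
    then obtain n where n: "n \<in> maxT G'" "le T n (zero G)" using zero_lt[OF assms(2,1)] by blast
    have "le T n x" using tr_le_le[OF tT n(2) lt_le[OF a]] .
    hence "n = m'" using g_max_le[OF tT gr[OF assms(2)] n(1) assms(6) _ assms(8)] by simp
    moreover have "G' \<noteq> G" using False by simp
    ultimately show ?thesis using b5I[OF assms(2,1) _ assms(4,3) n(1,2)] assms(10) by simp
  qed
  ultimately show ?thesis by blast
qed

lemma H_lin: assumes yx: "lt H y x" and zx: "lt H z x" shows "y = z \<or> lt H y z \<or> lt H z y"
  using yx
proof (cases rule: ltHE)
  case b1 note X = this
  from zx show ?thesis
  proof (cases rule: ltHE)
    case b1
    have "y = z \<or> lt T y z \<or> lt T z y" using tr_lin[OF tT X(3) b1(3)] .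
    thus ?thesis using b1I[OF X(1) b1(1)] b1I[OF b1(1) X(1)] by blast
  next
    case (b4 G m) thus ?thesis using mixA[OF X(1) b4(1,2,4,6) lt_le[OF X(3)] b4(5)] by blast
  next
    case (b2 G) show ?thesis by (rule SI[OF X(2) b2(3) b2(1)])
  next
    case (b3 G) show ?thesis by (rule SI[OF X(2) b3(3) b3(1)])
  next
    case (b5 D E) show ?thesis by (rule SI[OF X(2) b5(5) b5(2)])
  qed
next
  case (b4 G m) note X = this
  from zx show ?thesis
  proof (cases rule: ltHE)
    case b1 thus ?thesis using mixA[OF b1(1) X(1,2,4,6) lt_le[OF b1(3)] X(5)] by blast
  next
    case (b4 G' m') show ?thesis by (rule mixB[OF X(1) b4(1) X(2) b4(2) X(4) b4(4) X(5) b4(5) X(6) b4(6)])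
  next
    case (b2 G') show ?thesis by (rule SI[OF X(3) b2(3) b2(1)])
  next
    case (b3 G') show ?thesis by (rule SI[OF X(3) b3(3) b3(1)])
  next
    case (b5 D E) show ?thesis by (rule SI[OF X(3) b5(5) b5(2)])
  qed
next
  case (b2 G) note X = this
  from zx show ?thesis
  proof (cases rule: ltHE)
    case (b2 G')
    have e: "G' = G" by (rule impl_disj[OF b2(1) X(1) b2(3) X(3)])
    have "y = z \<or> lt G y z \<or> lt G z y" using tr_lin[OF Gtr[OF X(1)] X(4)] b2(4) e by simp
    thus ?thesis using b2I[OF X(1) X(2)] b2I[OF X(1) _ X(2)] b2(2) e by blast
  next
    case (b3 G')
    have e: "G' = G" by (rule impl_disj[OF b3(1) X(1) b3(3) X(3)])
    show ?thesis using b3I[OF X(1) b3(2) X(2)] b3(4) e by simp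
  next
    case (b5 D E m)
    have e: "E = G" by (rule impl_disj[OF b5(2) X(1) b5(5) X(3)])
    show ?thesis using b5I[OF b5(1) X(1) _ b5(4) X(2) b5(6) _ b5(8)] b5(3,7) e by simp
  next
    case b1 show ?thesis by (rule SI[OF b1(2) X(3) X(1)])
  next
    case (b4 G') show ?thesis by (rule SI[OF b4(3) X(3) X(1)])
  qed
next
  case (b3 G) note X = this
  from zx show ?thesis
  proof (cases rule: ltHE)
    case (b2 G')
    have e: "G' = G" by (rule impl_disj[OF b2(1) X(1) b2(3) X(3)])
    show ?thesis using b3I[OF X(1) X(2) _ X(4)] b2(2) e by simp
  next
    case (b3 G')
    have e: "G' = G" by (rule impl_disj[OF b3(1) X(1) b3(3) X(3)])
    have "le T y z \<or> le T z y" using tr_lin_le[OF tT X(4)] b3(4) e by simp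
    thus ?thesis using b1I[OF X(2) b3(2)] b1I[OF b3(2) X(2)] unfolding le_def by blast
  next
    case (b5 D E m)
    have e: "E = G" by (rule impl_disj[OF b5(2) X(1) b5(5) X(3)])
    show ?thesis using mixA[OF X(2) b5(1,4,6,8) X(4)] b5(7) e by auto
  next
    case b1 show ?thesis by (rule SI[OF b1(2) X(3) X(1)])
  next
    case (b4 G') show ?thesis by (rule SI[OF b4(3) X(3) X(1)])
  qed
next
  case (b5 D E m) note X = this
  from zx show ?thesis
  proof (cases rule: ltHE)
    case (b2 G')
    have e: "G' = E" by (rule impl_disj[OF b2(1) X(2) b2(3) X(5)])
    show ?thesis using b5I[OF X(1) b2(1) _ X(4) b2(2) X(6) _ X(8)] X(3,7) e by simp
  next
    case (b3 G')
    have e: "G' = E" by (rule impl_disj[OF b3(1) X(2) b3(3) X(5)])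
    show ?thesis using mixA[OF b3(2) X(1,4,6,8) b3(4)] X(7) e by auto
  next
    case (b5 D' E' m')
    have e: "E' = E" by (rule impl_disj[OF b5(2) X(2) b5(5) X(5)])
    show ?thesis using mixB[OF X(1) b5(1) X(4) b5(4) X(6) b5(6) X(7) _ X(8) b5(8)] b5(7) e by simp
  next
    case b1 show ?thesis by (rule SI[OF b1(2) X(5) X(2)])
  next
    case (b4 G') show ?thesis by (rule SI[OF b4(3) X(5) X(2)])
  qed
qed

end
context hyb begin

lemma H_irr: "\<not> lt H x x"
proof
  assume "lt H x x"
  thus False
  proof (cases rule: ltHE)
    case b1 thus False using tr_irr[OF tT] by blast
  next
    case (b2 G) thus False using tr_irr[OF Gtr] by blast
  next
    case (b5 D E m) thus False using impl_disj by blast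
  qed (use S_notimpl in blast)+
qed

lemma nodesG_H: assumes G: "G \<in> \<Gamma>" shows "nodes G \<subseteq> nodes H"
proof
  fix v assume v: "v \<in> nodes G"
  have "v = zero G \<or> v \<in> maxT G \<or> v \<in> impl G" using g_cases[OF tT gr[OF G] v] .
  moreover have "zero G \<in> S" using zero_S[OF G] .
  moreover have "v \<in> maxT G \<Longrightarrow> v \<in> S" using max_S[OF G] .
  moreover have "v \<in> impl G \<Longrightarrow> v \<in> (\<Union>G\<in>\<Gamma>. impl G)" using G by blast
  ultimately show "v \<in> nodes H" unfolding nodes_H by blast
qed

lemma TG: assumes G: "G \<in> \<Gamma>" and u: "u \<in> nodes G" and v: "v \<in> nodes G" and l: "lt G u v"
  shows "lt H u v"
proof -
  have gt: "is_tree G" using Gtr[OF G] .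
  have zT: "zero G \<in> nodes T" using g_zero_T[OF tT gr[OF G]] .
  consider "u = zero G" | "u \<in> maxT G" | "u \<in> impl G" using g_cases[OF tT gr[OF G] u] by blast
  thus ?thesis
  proof cases
    case 1
    consider "v = zero G" | "v \<in> maxT G" | "v \<in> impl G" using g_cases[OF tT gr[OF G] v] by blast
    thus ?thesis
    proof cases
      case 1 thus ?thesis using \<open>u = zero G\<close> l tr_irr[OF gt] by blast
    next
      case 2 thus ?thesis using \<open>u = zero G\<close> b1I zero_S[OF G] max_S[OF G] zm[OF G] by blast
    next
      case 3 thus ?thesis using \<open>u = zero G\<close> b3I[OF G zero_S[OF G]] le_refl[OF zT] by blast
    qed
  next
    case 2 show ?thesis by (rule notE[OF mxL[OF 2] l])
  next
    case 3
    consider "v = zero G" | "v \<in> maxT G" | "v \<in> impl G" using g_cases[OF tT gr[OF G] v] by blast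
    thus ?thesis
    proof cases
      case 1 thus ?thesis using 3 l g_zero_lt[OF tT gr[OF G] u] g_impl[OF tT gr[OF G]] tr_asym[OF gt] by blast
    next
      case 2 show ?thesis by (rule b4I[OF G 3 max_S[OF G 2] 2 le_refl[OF conjunct1[OF g_max[OF tT gr[OF G] 2]]] l])
    next
      case 3 thus ?thesis using \<open>u \<in> impl G\<close> l b2I[OF G] by blast
    qed
  qed
qed

lemma leGH: "G \<in> \<Gamma> \<Longrightarrow> u \<in> nodes G \<Longrightarrow> v \<in> nodes G \<Longrightarrow> le G u v \<Longrightarrow> le H u v"
  unfolding le_def using TG nodesG_H by blast

lemma HG: assumes G: "G \<in> \<Gamma>" and u: "u \<in> nodes G" and v: "v \<in> nodes G" and l: "lt H u v"
  shows "lt G u v"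
proof -
  have gt: "is_tree G" using Gtr[OF G] .
  have uv: "u \<noteq> v" using l H_irr by blast
  consider "u = zero G" | "u \<in> maxT G" | "u \<in> impl G" using g_cases[OF tT gr[OF G] u] by blast
  thus ?thesis
  proof cases
    case 1 thus ?thesis using g_zero_lt[OF tT gr[OF G] v] uv by blast
  next
    case 2
    have uS: "u \<in> S" using max_S[OF G 2] .
    consider "v = zero G" | "v \<in> maxT G" | "v \<in> impl G" using g_cases[OF tT gr[OF G] v] by blast
    thus ?thesis
    proof cases
      case 1
      hence "lt H v u" using TG[OF G v u] g_zero_lt[OF tT gr[OF G] u] uv by blast
      thus ?thesis using l H_trans H_irr by blast
    next
      case 3
      from l show ?thesis
      proof (cases rule: ltHE)
        case (b3 G')
        hence "G' = G" using 3 impl_disj G by blast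
        thus ?thesis using b3 zm[OF G 2] tr_le_lt[OF tT] tr_irr[OF tT] by metis
      qed (use uS S_notimpl 3 G in blast)+
    next
      case v2: 2
      from l show ?thesis
      proof (cases rule: ltHE)
        case b1 thus ?thesis using g_anti[OF tT gr[OF G] 2 v2 lt_le[OF b1(3)]] uv by blast
      qed (use uS S_notimpl v2 max_S[OF G] in blast)+
    qed
  next
    case 3
    consider "v = zero G" | "v \<in> maxT G" | "v \<in> impl G" using g_cases[OF tT gr[OF G] v] by blast
    thus ?thesis
    proof cases
      case 1
      hence "lt H v u" using TG[OF G v u] g_zero_lt[OF tT gr[OF G] u] uv by blast
      thus ?thesis using l H_trans H_irr by blast
    next
      case v3: 3
      from l show ?thesis
      proof (cases rule: ltHE)
        case (b2 G')
        thus ?thesis using impl_disj 3 G by blast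
      next
        case (b5 D E m) thus ?thesis using impl_disj 3 v3 G by blast
      qed (use S_notimpl 3 v3 G in blast)+
    next
      case v2: 2
      from l show ?thesis
      proof (cases rule: ltHE)
        case (b4 G' m)
        hence "G' = G" using 3 impl_disj G by blast
        hence "m = v" using g_anti[OF tT gr[OF G] _ v2] b4 by blast
        thus ?thesis using b4 \<open>G' = G\<close> by blast
      qed (use S_notimpl 3 v2 max_S[OF G] G in blast)+
    qed
  qed
qed

lemma up_lemma: assumes G: "G \<in> \<Gamma>" and a: "a \<in> nodes G" and b: "b \<notin> nodes G" and l: "lt H a b"
  shows "\<exists>m\<in>maxT G. le G a m \<and> lt H m b"
proof -
  consider "a = zero G" | "a \<in> maxT G" | "a \<in> impl G" using g_cases[OF tT gr[OF G] a] by blast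
  thus ?thesis
  proof cases
    case 2 thus ?thesis using l le_refl[OF a] by blast
  next
    case 1
    from l show ?thesis
    proof (cases rule: ltHE)
      case b1
      then obtain m where m: "m \<in> maxT G" "le T m b" using S_up[OF _ G] 1 by blast
      have "m \<noteq> b" using mxN[OF m(1)] b by blast
      hence "lt T m b" using m(2) unfolding le_def by blast
      moreover have "le G (zero G) m" using g_zero(2)[OF tT gr[OF G] mxN[OF m(1)]] .
      ultimately show ?thesis using m(1) b1I[OF max_S[OF G m(1)] b1(2)] 1 by blast
    next
      case (b3 E)
      have "E \<noteq> G" using b3 b g_impl[OF tT gr[OF G]] by blast
      hence "zero G \<noteq> zero E" using zero_neq G b3 by blast
      hence "lt T (zero G) (zero E)" using b3 1 unfolding le_def by auto
      then obtain m where m: "m \<in> maxT G" "le T m (zero E)" using zero_lt[OF G b3(1)] by blast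
      moreover have "le G (zero G) m" using g_zero(2)[OF tT gr[OF G] mxN[OF m(1)]] .
      ultimately show ?thesis using b3I[OF b3(1) max_S[OF G m(1)] b3(3) m(2)] 1 by blast
    qed (use 1 zero_S[OF G] S_notimpl in blast)+
  next
    case 3
    from l show ?thesis
    proof (cases rule: ltHE)
      case (b2 G')
      hence "G' = G" using 3 impl_disj G by blast
      thus ?thesis using b2 b g_impl[OF tT gr[OF G]] by blast
    next
      case (b4 G' m)
      hence e: "G' = G" using 3 impl_disj G by blast
      have "m \<noteq> b" using mxN[of m G] b4(4) e b by blast
      hence lmb: "lt T m b" using b4 unfolding le_def by blast
      have mG: "m \<in> maxT G" using b4(4) e by simp
      have "lt H m b" using b1I[OF max_S[OF G mG] b4(3) lmb] .
      moreover have "le G a m" using lt_le[OF b4(6)] e by simp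
      ultimately show ?thesis using mG by blast
    next
      case (b5 D E m)
      hence e: "D = G" using 3 impl_disj G by blast
      have mG: "m \<in> maxT G" using b5(6) e by simp
      have "lt H m b" using b3I[OF b5(2) max_S[OF G mG] b5(5) b5(7)] .
      moreover have "le G a m" using lt_le[OF b5(8)] e by simp
      ultimately show ?thesis using mG by blast
    qed (use 3 S_notimpl G in blast)+
  qed
qed

lemma down: assumes B: "branch H B" and b: "b \<in> B" and l: "lt H a b" shows "a \<in> B"
proof -
  have ch: "chain H B" using B unfolding branch_def by blast
  have aN: "a \<in> nodes H" using H_nodes[OF l] by blast
  have c: "\<And>b'. b' \<in> B \<Longrightarrow> le H a b' \<or> le H b' a"
  proof -
    fix b' assume b': "b' \<in> B"
    have "le H b' b \<or> le H b b'" using ch b b' unfolding chain_def by blast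
    moreover have "le H b' b \<Longrightarrow> le H a b' \<or> le H b' a"
    proof -
      assume "le H b' b"
      hence "b' = b \<or> lt H b' b" unfolding le_def by blast
      moreover have "b' = b \<Longrightarrow> ?thesis" using l unfolding le_def by simp
      moreover have "lt H b' b \<Longrightarrow> ?thesis"
      proof -
        assume h: "lt H b' b"
        have "a = b' \<or> lt H a b' \<or> lt H b' a" using H_lin[OF l h] .
        thus ?thesis using aN unfolding le_def by blast
      qed
      ultimately show ?thesis by blast
    qed
    moreover have "le H b b' \<Longrightarrow> le H a b' \<or> le H b' a"
    proof -
      assume "le H b b'"
      hence "b = b' \<or> lt H b b'" unfolding le_def by blast
      moreover have "b = b' \<Longrightarrow> ?thesis" using l unfolding le_def by simp
      moreover have "lt H b b' \<Longrightarrow> ?thesis" using H_trans[OF l] unfolding le_def by blast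
      ultimately show ?thesis by blast
    qed
    ultimately show "le H a b' \<or> le H b' a" by blast
  qed
  have "chain H (insert a B)"
    unfolding chain_def
  proof (intro conjI ballI)
    show "insert a B \<subseteq> nodes H" using ch aN unfolding chain_def by blast
  next
    fix x y assume x: "x \<in> insert a B" and y: "y \<in> insert a B"
    show "le H x y \<or> le H y x"
    proof (cases "x = a")
      case True
      show ?thesis
      proof (cases "y = a")
        case True thus ?thesis using \<open>x = a\<close> aN le_refl by metis
      next
        case False thus ?thesis using \<open>x = a\<close> y c by blast
      qed
    next
      case False
      hence xB: "x \<in> B" using x by blast
      show ?thesis
      proof (cases "y = a")
        case True thus ?thesis using xB c by blast
      next
        case False thus ?thesis using xB y ch unfolding chain_def by blast
      qed
    qed
  qed
  thus ?thesis using B unfolding branch_def by blast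
qed

end
context hyb begin

lemma partA: assumes B: "branch H B" and G: "G \<in> \<Gamma>" and ne: "B \<inter> nodes G \<noteq> {}"
  shows "branch G (B \<inter> nodes G)"
proof -
  have ch: "chain H B" using B unfolding branch_def by blast
  have chG: "chain G (B \<inter> nodes G)"
    unfolding chain_def
  proof (intro conjI ballI)
    fix u v assume u: "u \<in> B \<inter> nodes G" and v: "v \<in> B \<inter> nodes G"
    have "le H u v \<or> le H v u" using ch u v unfolding chain_def by blast
    thus "le G u v \<or> le G v u" using HG[OF G] u v unfolding le_def by blast
  qed blast
  moreover have "\<forall>C. chain G C \<longrightarrow> B \<inter> nodes G \<subseteq> C \<longrightarrow> C = B \<inter> nodes G"
  proof (intro allI impI)
    fix C assume C: "chain G C" and sub: "B \<inter> nodes G \<subseteq> C"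
    have CG: "C \<subseteq> nodes G" using C unfolding chain_def by blast
    have "C \<subseteq> B"
    proof
      fix c assume c: "c \<in> C"
      have cG: "c \<in> nodes G" using CG c by blast
      have cH: "c \<in> nodes H" using nodesG_H[OF G] cG by blast
      show "c \<in> B"
      proof (rule ccontr)
        assume cB: "c \<notin> B"
        have "\<not> chain H (insert c B)" using B cB unfolding branch_def by blast
        then obtain b where b: "b \<in> B" "\<not> le H b c" "\<not> le H c b"
          using ch cH unfolding chain_def le_def by blast
        obtain a where a: "a \<in> B" "a \<in> nodes G" using ne by blast
        have "le G a c \<or> le G c a" using C a sub c unfolding chain_def by blast
        moreover have "\<not> le G c a"
        proof
          assume "le G c a"
          hence "le H c a" using leGH[OF G cG a(2)] by blast
          hence "c \<in> B" using down[OF B a(1)] a(1) unfolding le_def by blast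
          thus False using cB by blast
        qed
        ultimately have ac: "lt G a c" unfolding le_def by blast
        hence acH: "lt H a c" using TG[OF G a(2) cG] by blast
        have "le H b a \<or> le H a b" using ch a(1) b(1) unfolding chain_def by blast
        moreover have "\<not> le H b a" using acH b(2) H_trans unfolding le_def by blast
        ultimately have ab: "lt H a b" unfolding le_def by blast
        have bG: "b \<notin> nodes G"
        proof
          assume bG: "b \<in> nodes G"
          hence "le G b c \<or> le G c b" using C sub b(1) c unfolding chain_def by blast
          thus False using leGH[OF G] bG cG b(2,3) by blast
        qed
        obtain m where m: "m \<in> maxT G" "le G a m" "lt H m b" using up_lemma[OF G a(2) bG ab] by blast
        have mB: "m \<in> B" using down[OF B b(1) m(3)] .
        have mG: "m \<in> nodes G" using mxN[OF m(1)] .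
        have "le G c m \<or> le G m c" using C sub mB mG c unfolding chain_def by blast
        moreover have "\<not> lt G m c" using mxL[OF m(1)] .
        ultimately have "le G c m" unfolding le_def by blast
        hence "le H c m" using leGH[OF G cG mG] by blast
        hence "lt H c b" using m(3) H_trans unfolding le_def by blast
        thus False using b(3) unfolding le_def by blast
      qed
    qed
    thus "C = B \<inter> nodes G" using CG sub by blast
  qed
  ultimately show ?thesis unfolding branch_def by blast
qed

lemma partB: assumes B: "branch H B" and bc: "\<forall>G\<in>\<Gamma>. bounded_chains G" and b: "b \<in> B"
  shows "\<exists>c\<in>B \<inter> S. le H b c"
proof (cases "b \<in> S")
  case True thus ?thesis using b le_refl[of b H] nodes_H by blast
next
  case False
  have "b \<in> nodes H" using B b unfolding branch_def chain_def by blast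
  then obtain G where G: "G \<in> \<Gamma>" "b \<in> impl G" using False nodes_H by blast
  have bG: "b \<in> nodes G" using g_impl[OF tT gr[OF G(1)] G(2)] by blast
  let ?BG = "B \<inter> nodes G"
  have br: "branch G ?BG" using partA[OF B G(1)] b bG by blast
  hence chG: "chain G ?BG" unfolding branch_def by blast
  obtain z where z: "z \<in> nodes G" "\<forall>c\<in>?BG. le G c z"
    using bc G(1) chG b bG unfolding bounded_chains_def by blast
  have "chain G (insert z ?BG)" by (rule chain_ins[OF chG z(1) z(2)])
  hence zB: "z \<in> ?BG" using br unfolding branch_def by blast
  have zS: "z \<in> S"
  proof -
    consider "z = zero G" | "z \<in> maxT G" | "z \<in> impl G" using g_cases[OF tT gr[OF G(1)] z(1)] by blast
    thus ?thesis
    proof cases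
      case 1 thus ?thesis using zero_S[OF G(1)] by simp
    next
      case 2 thus ?thesis using max_S[OF G(1)] by simp
    next
      case 3
      hence "z \<notin> maxT G" using g_impl[OF tT gr[OF G(1)]] by blast
      then obtain y where y: "lt G z y" using z(1) unfolding maxT_def by blast
      have yG: "y \<in> nodes G" using tr_nodes[OF Gtr[OF G(1)] y] by blast
      have "\<forall>c\<in>?BG. le G c y"
      proof
        fix c assume "c \<in> ?BG"
        hence "le G c z" using z(2) by blast
        thus "le G c y" using lt_le[OF tr_le_lt[OF Gtr[OF G(1)] _ y]] by blast
      qed
      hence "chain G (insert y ?BG)" by (rule chain_ins[OF chG yG])
      hence "y \<in> ?BG" using br unfolding branch_def by blast
      hence "le G y z" using z by blast
      hence "lt G z z" using y tr_lt_le[OF Gtr[OF G(1)]] by blast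
      thus ?thesis using tr_irr[OF Gtr[OF G(1)]] by blast
    qed
  qed
  have "le H b z" using leGH[OF G(1) bG z(1)] z(2) b bG by blast
  thus ?thesis using zB zS by blast
qed

end

theorem mainTheorem9:
  fixes T :: "'a tree" and \<gamma> :: "'a tree set" and B :: "'a set"
  assumes "is_tree T"
    and "consistent T \<gamma>"
    and "branch (hybr T \<gamma>) B"
  shows "(\<forall>G\<in>\<gamma>. B \<inter> nodes G \<noteq> {} \<longrightarrow> branch G (B \<inter> nodes G))
    \<and> ((\<forall>G\<in>\<gamma>. bounded_chains G) \<longrightarrow>
         (\<forall>b\<in>B. \<exists>c\<in>B \<inter> supp T \<gamma>. le (hybr T \<gamma>) b c))"
proof -
  interpret hyb T \<gamma> using assms(1,2) by (rule hyb.intro)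
  show ?thesis using partA[OF assms(3)] partB[OF assms(3)] by blast
qed

end
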